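(* Every morphism $f\colon[n]\to[m]$ of $\mathcal{I}\Gamma(as)$ can be written uniquely as $f=a\circ h$ with $h\in H_{n+1}^{+}$ and $a\colon[n]\to[m]$ a morphism of the subcategory $\mathcal{R}\cong\Delta R^{op}$. That is, $\mathcal{I}\Gamma(as)=\Delta R^{op}\circ\mathbf{H}^{+}$.
   Context: Let $C_2=\{1,t\}$ and $[n]=\{0,\dots,n\}$. The category $\mathcal{IF}(as)$ has objects $[n]$; a morphism $f\colon[n]\to[m]$ is a map of sets with a total order on each fibre $f^{-1}(i)$ and a label in $C_2$ on each element of $[n]$ (written $j^\alpha$). For $S=\{j_1^{\alpha_1}<\cdots<j_r^{\alpha_r}\}$ put $1\ast S=S$, $t\ast S=\{j_r^{t\alpha_r}<\cdots<j_1^{t\alpha_1}\}$; the composite of $f\colon[n]\to[m]$, $g\colon[m]\to[p]$ has underlying map $g\circ f$ and fibres $(g\circ f)^{-1}(i)=\coprod_{j^\alpha\in g^{-1}(i)}\alpha\ast f^{-1}(j)$ (ordered disjoint union). $\mathcal{I}\Gamma(as)$ is the subcategory of morphisms with $f(0)=0$. $H_{n+1}$ is the automorphism group of $[n]$ in $\mathcal{IF}(as)$, and $H_{n+1}^{+}$ the subgroup of automorphisms fixing $0$ whose label on $0$ is $1$; $\mathbf{H}^+$ is the corresponding groupoid. Morphisms of $\mathcal{I}\Gamma(as)$ (all labels $1$ unless stated): for $n\geqslant1$ and $0\leqslant i\leqslant n-1$, $d_i\colon[n]\to[n-1]$ sends $j\mapsto j$ ($j\leqslant i$), $j\mapsto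 j-1$ ($j>i$), with fibre over $i$ equal to $\{i<i+1\}$; $d_n\colon[n]\to[n-1]$ sends $j\mapsto j$ ($j<n$), $n\mapsto0$, with fibre over $0$ equal to $\{n<0\}$; for $0\leqslant j\leqslant n$, $s_j\colon[n]\to[n+1]$ sends $k\mapsto k$ ($k\leqslant j$), $k\mapsto k+1$ ($k>j$), so the fibre over $j+1$ is empty; $\rho_n\colon[n]\to[n]$ sends $0\mapsto 0$ and $k\mapsto n+1-k$ for $1\leqslant k\leqslant n$, with all labels equal to $t$. $\mathcal{R}$ denotes the subcategory of $\mathcal{I}\Gamma(as)$ generated by all $d_i$, $s_j$, $\rho_n$; it is isomorphic to $\Delta R^{op}$, the opposite of the reflexive crossed simplicial group category. *)

theory Defs
  imports Main
begin

text \<open>A morphism [n] \<rightarrow> [m] of IF(as) is encoded by its source n, target m and,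
for each i in [m] = {0..m}, the list of its fibre over i in the fibre's total order,
each element j of [n] carrying its label in C2 (False = 1, True = t).\<close>

datatype mor = Mor (src: nat) (tgt: nat) (fib: "(nat \<times> bool) list list")

definition valid :: "mor \<Rightarrow> bool" where
  "valid f \<longleftrightarrow> length (fib f) = tgt f + 1
     \<and> distinct (map fst (concat (fib f)))
     \<and> set (map fst (concat (fib f))) = {0..src f}"

definition act :: "bool \<Rightarrow> (nat \<times> bool) list \<Rightarrow> (nat \<times> bool) list" where
  "act \<alpha> S = (if \<alpha> then map (\<lambda>(x, \<beta>). (x, \<not> \<beta>)) (rev S) else S)"

text \<open>Composite g \<circ> f (f first).\<close>
definition comp :: "mor \<Rightarrow> mor \<Rightarrow> mor" where
  "comp g f = Mor (src f) (tgt g)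
     (map (\<lambda>S. concat (map (\<lambda>(j, \<alpha>). act \<alpha> (fib f ! j)) S)) (fib g))"

definition idm :: "nat \<Rightarrow> mor" where
  "idm n = Mor n n (map (\<lambda>k. [(k, False)]) [0..<n+1])"

text \<open>Morphisms of I\<Gamma>(as): f(0) = 0.\<close>
definition IGamma :: "mor \<Rightarrow> bool" where
  "IGamma f \<longleftrightarrow> valid f \<and> 0 \<in> fst ` set (fib f ! 0)"

definition face :: "nat \<Rightarrow> nat \<Rightarrow> mor" where
  "face n i = Mor n (n - 1)
     (map (\<lambda>k. if i = n then (if k = 0 then [(n, False), (0, False)] else [(k, False)])
               else if k < i then [(k, False)]
               else if k = i then [(i, False), (i + 1, False)]
               else [(k + 1, False)]) [0..<n])"

definition degen :: "nat \<Rightarrow> nat \<Rightarrow> mor" where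
  "degen n j = Mor n (n + 1)
     (map (\<lambda>k. if k \<le> j then [(k, False)]
               else if k = j + 1 then []
               else [(k - 1, False)]) [0..<n+2])"

definition refl_mor :: "nat \<Rightarrow> mor" where
  "refl_mor n = Mor n n
     (map (\<lambda>k. if k = 0 then [(0, True)] else [(n + 1 - k, True)]) [0..<n+1])"

inductive_set Rcat :: "mor set" where
  R_id: "idm n \<in> Rcat"
| R_face: "1 \<le> n \<Longrightarrow> i \<le> n \<Longrightarrow> face n i \<in> Rcat"
| R_degen: "j \<le> n \<Longrightarrow> degen n j \<in> Rcat"
| R_refl: "refl_mor n \<in> Rcat"
| R_comp: "a \<in> Rcat \<Longrightarrow> b \<in> Rcat \<Longrightarrow> tgt a = src b \<Longrightarrow> comp b a \<in> Rcat"

text \<open>H^+_{n+1}: automorphisms of [n] fixing 0 with label 1 on 0.\<close>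
definition Hplus :: "nat \<Rightarrow> mor set" where
  "Hplus n = {h. valid h \<and> src h = n \<and> tgt h = n
                 \<and> (\<forall>k \<le> n. length (fib h ! k) = 1)
                 \<and> fib h ! 0 = [(0, False)]}"

end

theory Submission
  imports Defs
begin


definition ordl :: "bool \<Rightarrow> nat \<Rightarrow> nat list" where
  "ordl \<alpha> n = (if \<alpha> then rev [0..<n+1] else [0..<n+1])"

definition Inv :: "mor \<Rightarrow> bool" where
  "Inv g \<longleftrightarrow> length (fib g) = tgt g + 1 \<and> 0 \<in> fst ` set (fib g ! 0)
     \<and> (\<exists>\<alpha> r. concat (fib g) = map (\<lambda>x. (x, \<alpha>)) (rotate r (ordl \<alpha> (src g))))"

lemma concat_rotate: "\<exists>r'. concat (rotate r xs) = rotate r' (concat xs)"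
proof (induction r)
  case 0 then show ?case by (rule exI[of _ 0]) simp
next
  case (Suc r)
  then obtain r' where r': "concat (rotate r xs) = rotate r' (concat xs)" by blast
  show ?case
  proof (cases "rotate r xs")
    case Nil then show ?thesis using r' by (metis rotate1_is_Nil_conv rotate_Suc)
  next
    case (Cons y ys)
    have "concat (rotate (Suc r) xs) = concat ys @ y" using Cons by simp
    also have "\<dots> = rotate (length y) (y @ concat ys)" by (simp add: rotate_append)
    also have "\<dots> = rotate (length y + r') (concat xs)" using r' Cons by (simp add: rotate_rotate)
    finally show ?thesis by blast
  qed
qed

lemma rev_rotate_ex: "\<exists>r'. rev (rotate r xs) = rotate r' (rev xs)"
proof (cases "xs = []")
  case True then show ?thesis by simp
next
  case False
  define L where "L = length xs"
  have L: "L > 0" using False L_def by simp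
  have "rotate (L - r mod L) (rev xs) = rev (rotate (L - ((L - r mod L) mod L)) xs)"
    using rotate_rev L_def by metis
  moreover have "rotate (L - ((L - r mod L) mod L)) xs = rotate r xs"
  proof (cases "r mod L = 0")
    case True
    then show ?thesis using L by (simp add: L_def rotate_conv_mod[of r xs])
  next
    case False
    then have "(L - r mod L) mod L = L - r mod L" using L by simp
    then have "L - ((L - r mod L) mod L) = r mod L" using L by simp
    then show ?thesis using rotate_conv_mod[of r xs] L_def by simp
  qed
  ultimately show ?thesis by metis
qed

lemma act_fst: "fst ` set (act b S) = fst ` set S"
  by (simp add: act_def image_image case_prod_beta)

lemma concat_map_concat: "concat (map (\<lambda>S. concat (map g S)) L) = concat (map g (concat L))"
  by (induction L) auto

lemma rev_ordl: "rev (ordl a n) = ordl (\<not> a) n"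
  by (simp add: ordl_def)

lemma Inv_comp:
  assumes a: "Inv a" and b: "Inv b" and t: "tgt a = src b"
  shows "Inv (comp b a)"
proof -
  obtain \<alpha> ra where ra: "concat (fib a) = map (\<lambda>x. (x, \<alpha>)) (rotate ra (ordl \<alpha> (src a)))"
    using a Inv_def by blast
  obtain \<beta> rb where rb: "concat (fib b) = map (\<lambda>x. (x, \<beta>)) (rotate rb (ordl \<beta> (src b)))"
    using b Inv_def by blast
  have la: "length (fib a) = src b + 1" using a t Inv_def by simp
  have lb: "length (fib b) = tgt b + 1" using b Inv_def by simp
  have c1: "length (fib (comp b a)) = tgt (comp b a) + 1" using lb by (simp add: comp_def)
  have c2: "0 \<in> fst ` set (fib (comp b a) ! 0)"
  proof -
    obtain \<beta>0 where b0: "(0, \<beta>0) \<in> set (fib b ! 0)" using b Inv_def by force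
    have a0: "0 \<in> fst ` set (act \<beta>0 (fib a ! 0))" using a Inv_def act_fst by metis
    have "fib (comp b a) ! 0 = concat (map (\<lambda>(j, \<alpha>). act \<alpha> (fib a ! j)) (fib b ! 0))"
      using lb by (simp add: comp_def)
    then show ?thesis using b0 a0 by force
  qed
  define A where "A = map (\<lambda>j. act \<beta> (fib a ! j)) (ordl \<beta> (src b))"
  have "concat (fib (comp b a)) = concat (map (\<lambda>(j, \<alpha>). act \<alpha> (fib a ! j)) (concat (fib b)))"
    by (simp add: comp_def concat_map_concat)
  also have "\<dots> = concat (map (\<lambda>j. act \<beta> (fib a ! j)) (rotate rb (ordl \<beta> (src b))))"
    by (simp add: rb o_def)
  also have "\<dots> = concat (rotate rb A)" by (simp add: A_def rotate_map)
  finally have cc: "concat (fib (comp b a)) = concat (rotate rb A)" .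
  obtain r1 where r1: "concat (rotate rb A) = rotate r1 (concat A)" using concat_rotate by blast
  have "\<exists>\<gamma> r. concat A = map (\<lambda>x. (x, \<gamma>)) (rotate r (ordl \<gamma> (src a)))"
  proof (cases \<beta>)
    case False
    have "A = map (\<lambda>j. fib a ! j) [0..<length (fib a)]"
      using False la by (simp add: A_def ordl_def act_def)
    then have "A = fib a" by (simp add: map_nth)
    then show ?thesis using ra by blast
  next
    case True
    define fl where "fl = (\<lambda>(x::nat, b::bool). (x, \<not> b))"
    have "A = map (\<lambda>j. map fl (rev (fib a ! j))) (rev [0..<length (fib a)])"
      using True la by (simp add: A_def ordl_def act_def fl_def)
    also have "\<dots> = rev (map (\<lambda>S. map fl (rev S)) (map (\<lambda>j. fib a ! j) [0..<length (fib a)]))"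
      by (simp add: rev_map o_def)
    also have "\<dots> = rev (map (\<lambda>S. map fl (rev S)) (fib a))" by (simp add: map_nth)
    finally have "concat A = concat (rev (map (\<lambda>S. map fl (rev S)) (fib a)))" by simp
    also have "\<dots> = map fl (rev (concat (fib a)))"
      by (simp add: rev_concat rev_map map_concat o_def)
    also have "\<dots> = map (\<lambda>x. (x, \<not> \<alpha>)) (rev (rotate ra (ordl \<alpha> (src a))))"
      by (simp add: ra rev_map fl_def o_def)
    finally have ca: "concat A = map (\<lambda>x. (x, \<not> \<alpha>)) (rev (rotate ra (ordl \<alpha> (src a))))" .
    obtain r2 where "rev (rotate ra (ordl \<alpha> (src a))) = rotate r2 (rev (ordl \<alpha> (src a)))"
      using rev_rotate_ex by blast
    then show ?thesis using ca rev_ordl by metis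
  qed
  then obtain \<gamma> r where "concat A = map (\<lambda>x. (x, \<gamma>)) (rotate r (ordl \<gamma> (src a)))" by blast
  then have "concat (fib (comp b a)) = map (\<lambda>x. (x, \<gamma>)) (rotate (r1 + r) (ordl \<gamma> (src (comp b a))))"
    using cc r1 by (simp add: rotate_map rotate_rotate comp_def)
  then show ?thesis using c1 c2 Inv_def by blast
qed



declare upt_Suc[simp del]

lemma upt_split: "i \<le> j \<Longrightarrow> j \<le> k \<Longrightarrow> [i..<k] = [i..<j] @ [j..<k]"
  by (metis le_add_diff_inverse upt_add_eq_append)

lemma Inv_idm: "Inv (idm n)"
proof -
  have c3: "concat (fib (idm n)) = map (\<lambda>x. (x, False)) (rotate 0 (ordl False (src (idm n))))"
    by (simp add: idm_def ordl_def)
  have c2: "0 \<in> fst ` set (fib (idm n) ! 0)" by (simp add: idm_def del: upt_Suc)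
  have c1: "length (fib (idm n)) = tgt (idm n) + 1" by (simp add: idm_def)
  show ?thesis unfolding Inv_def using c1 c2 c3 by blast
qed

lemma Inv_face:
  assumes "1 \<le> n" "i \<le> n" shows "Inv (face n i)"
proof (cases "i = n")
  case True
  obtain k where k: "n = Suc k" using assms by (cases n) auto
  have f: "fib (face n i) = [(n, False), (0, False)] # map (\<lambda>k. [(k, False)]) [1..<n]"
    using True k by (simp add: face_def upt_conv_Cons del: upt_Suc)
  have "concat (fib (face n i)) = map (\<lambda>x. (x, False)) (n # [0..<n])"
    unfolding f using k by (simp add: upt_conv_Cons del: upt_Suc)
  also have "n # [0..<n] = rotate (length [0..<n]) ([0..<n] @ [n])"
    by (simp only: rotate_append) simp
  finally have c3: "concat (fib (face n i)) = map (\<lambda>x. (x, False)) (rotate n (ordl False (src (face n i))))"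
    by (simp add: ordl_def face_def upt_Suc)
  have c1: "length (fib (face n i)) = tgt (face n i) + 1" using assms by (simp add: face_def)
  have c2: "0 \<in> fst ` set (fib (face n i) ! 0)" using f by simp
  show ?thesis unfolding Inv_def using c1 c2 c3 by blast
next
  case False
  then have i: "i < n" using assms by simp
  have f: "fib (face n i) = map (\<lambda>k. [(k, False)]) [0..<i] @ [(i, False), (i+1, False)] #
        map (\<lambda>k. [(k, False)]) [i+2..<n+1]"
  proof -
    have "[0..<n] = [0..<i] @ i # [Suc i..<n]" using i
      by (subst upt_split[of 0 i n]) (simp_all add: upt_conv_Cons del: upt_Suc)
    moreover have "map (\<lambda>k. [(k + 1, False)]) [Suc i..<n] = map (\<lambda>k. [(k, False)]) [Suc (Suc i)..<Suc n]"
      by (rule nth_equalityI) (simp_all del: upt_Suc)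
    moreover have "map (\<lambda>k. if k < i then [(k, False)] else if k = i then [(i, False), (i + 1, False)]
         else [(k + 1, False)]) [Suc i..<n] = map (\<lambda>k. [(k + 1, False)]) [Suc i..<n]"
      by (rule map_cong) auto
    moreover have "map (\<lambda>k. if k < i then [(k, False)] else if k = i then [(i, False), (i + 1, False)]
         else [(k + 1, False)]) [0..<i] = map (\<lambda>k. [(k, False)]) [0..<i]"
      by (rule map_cong) auto
    ultimately show ?thesis using i
      by (simp add: face_def)
  qed
  have "concat (fib (face n i)) = map (\<lambda>x. (x, False)) ([0..<i] @ i # (i+1) # [i+2..<n+1])"
    by (simp add: f del: upt_Suc)
  also have "[0..<i] @ i # (i+1) # [i+2..<n+1] = [0..<n+1]"
    using i by (subst upt_split[of 0 i "n+1"]) (simp_all add: upt_conv_Cons del: upt_Suc)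
  finally have c3: "concat (fib (face n i)) = map (\<lambda>x. (x, False)) (rotate 0 (ordl False (src (face n i))))"
    by (simp add: ordl_def face_def)
  have "fib (face n i) ! 0 = (if i = 0 then [(0, False), (1, False)] else [(0, False)])"
    using i by (simp add: face_def)
  then have c2: "0 \<in> fst ` set (fib (face n i) ! 0)" by simp
  have c1: "length (fib (face n i)) = tgt (face n i) + 1" using assms by (simp add: face_def)
  show ?thesis unfolding Inv_def using c1 c2 c3 by blast
qed



lemma Inv_degen:
  assumes "j \<le> n" shows "Inv (degen n j)"
proof -
  have sp: "[0..<n+2] = [0..<j+1] @ (j+1) # [j+2..<n+2]" using assms
    by (subst upt_split[of 0 "j+1" "n+2"]) (simp_all add: upt_conv_Cons)
  define D where "D = (\<lambda>k. if k \<le> j then [(k, False)] else if k = j + 1 then [] else [(k - 1, False)])"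
  have fd: "fib (degen n j) = map D [0..<n+2]" by (simp add: degen_def D_def)
  have m1: "map D [0..<j+1] = map (\<lambda>k. [(k, False)]) [0..<j+1]"
    by (rule map_cong) (auto simp: D_def)
  have m2: "map D [j+2..<n+2] = map (\<lambda>k. [(k, False)]) [j+1..<n+1]"
    by (rule nth_equalityI) (auto simp: D_def)
  have m0: "D (Suc j) = []" by (simp add: D_def)
  have "concat (fib (degen n j)) = concat (map D [0..<j+1]) @ concat (map D [j+2..<n+2])"
    unfolding fd sp by (simp add: m0)
  also have "\<dots> = map (\<lambda>x. (x, False)) ([0..<j+1] @ [j+1..<n+1])"
    by (simp only: m1 m2 concat_map_singleton map_append)
  also have "[0..<j+1] @ [j+1..<n+1] = [0..<n+1]" using assms upt_split[of 0 "j+1" "n+1"] by simp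
  finally have c3: "concat (fib (degen n j)) = map (\<lambda>x. (x, False)) (rotate 0 (ordl False (src (degen n j))))"
    by (simp add: ordl_def degen_def)
  have c1: "length (fib (degen n j)) = tgt (degen n j) + 1" by (simp add: degen_def)
  have c2: "0 \<in> fst ` set (fib (degen n j) ! 0)" by (simp add: degen_def)
  show ?thesis unfolding Inv_def using c1 c2 c3 by blast
qed

lemma Inv_refl: "Inv (refl_mor n)"
proof -
  have f: "fib (refl_mor n) = [(0, True)] # map (\<lambda>k. [(n + 1 - k, True)]) [1..<n+1]"
  proof -
    have "map (\<lambda>k. if k = 0 then [(0, True)] else [(n + 1 - k, True)]) [1..<n+1]
        = map (\<lambda>k. [(n + 1 - k, True)]) [1..<n+1]" by (rule map_cong) auto
    then show ?thesis by (simp add: refl_mor_def upt_conv_Cons)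
  qed
  have m: "map (\<lambda>k. (n + 1 - k, True)) [1..<n+1] = map (\<lambda>x. (x, True)) (rev [1..<n+1])"
    by (rule nth_equalityI) (auto simp: rev_nth)
  have "concat (fib (refl_mor n)) = map (\<lambda>x. (x, True)) (0 # rev [1..<n+1])"
    unfolding f by (simp only: concat_map_singleton m concat.simps append.simps list.map)
  also have "0 # rev [1..<n+1] = rotate (length (rev [1..<n+1])) (rev [1..<n+1] @ [0])"
    by (simp only: rotate_append) simp
  also have "rev [1..<n+1] @ [0] = rev [0..<n+1]" by (simp add: upt_conv_Cons)
  finally have c3: "concat (fib (refl_mor n)) = map (\<lambda>x. (x, True)) (rotate n (ordl True (src (refl_mor n))))"
    by (simp add: ordl_def refl_mor_def)
  have c1: "length (fib (refl_mor n)) = tgt (refl_mor n) + 1" by (simp add: refl_mor_def)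
  have c2: "0 \<in> fst ` set (fib (refl_mor n) ! 0)" using f by simp
  show ?thesis unfolding Inv_def using c1 c2 c3 by blast
qed

lemma src_comp[simp]: "src (comp b a) = src a" and tgt_comp[simp]: "tgt (comp b a) = tgt b"
  by (simp_all add: comp_def)

lemma Rcat_Inv: "g \<in> Rcat \<Longrightarrow> Inv g"
  by (induction rule: Rcat.induct) (auto intro: Inv_idm Inv_face Inv_degen Inv_refl Inv_comp)



definition phi :: "mor \<Rightarrow> nat \<times> bool \<Rightarrow> nat \<times> bool" where
  "phi h x = (fst (hd (fib h ! fst x)), snd x \<noteq> snd (hd (fib h ! fst x)))"

lemma comp_single:
  assumes "\<forall>x\<in>set (concat (fib a)). length (fib h ! fst x) = 1"
  shows "comp a h = Mor (src h) (tgt a) (map (map (phi h)) (fib a))"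
proof -
  have "\<And>S. S \<in> set (fib a) \<Longrightarrow> concat (map (\<lambda>(j, \<alpha>). act \<alpha> (fib h ! j)) S) = map (phi h) S"
  proof -
    fix S assume S: "S \<in> set (fib a)"
    have "map (\<lambda>(j, \<alpha>). act \<alpha> (fib h ! j)) S = map (\<lambda>x. [phi h x]) S"
    proof (rule map_cong)
      fix x assume x: "x \<in> set S"
      then have "length (fib h ! fst x) = 1" using assms S by auto
      then obtain y where y: "fib h ! fst x = [y]" by (cases "fib h ! fst x") auto
      show "(\<lambda>(j, \<alpha>). act \<alpha> (fib h ! j)) x = [phi h x]"
        using y by (cases x; cases y) (auto simp: act_def phi_def)
    qed simp
    then show "concat (map (\<lambda>(j, \<alpha>). act \<alpha> (fib h ! j)) S) = map (phi h) S"
      by (metis concat_map_singleton)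
  qed
  then show ?thesis unfolding comp_def by simp
qed

lemma concat_len_eq: "concat xs = concat ys \<Longrightarrow> map length xs = map length ys \<Longrightarrow> xs = ys"
proof (induction xs arbitrary: ys)
  case Nil then show ?case by simp
next
  case (Cons x xs)
  then obtain y ys' where ys: "ys = y # ys'" by (cases ys) auto
  with Cons.prems have l: "length x = length y" and "x @ concat xs = y @ concat ys'"
    and "map length xs = map length ys'" by auto
  then have "x = y" "concat xs = concat ys'" by (auto simp: append_eq_append_conv)
  then show ?case using Cons.IH ys \<open>map length xs = map length ys'\<close> by simp
qed

lemma rot_eq:
  assumes d: "distinct xs" and q: "q < length xs" and e: "rotate r xs ! q = rotate r' xs ! q"
  shows "rotate r xs = rotate r' xs"
proof -
  define L where "L = length xs"
  have L: "L > 0" using q unfolding L_def by linarith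
  have "xs ! ((r + q) mod L) = xs ! ((r' + q) mod L)" using e q nth_rotate L_def by metis
  then have "(r + q) mod L = (r' + q) mod L" using d L by (simp add: nth_eq_iff_index_eq L_def)
  then have "r mod L = r' mod L" by (simp add: nat_mod_eq_iff)
  then show ?thesis using rotate_conv_mod L_def by metis
qed



lemma set_ordl[simp]: "set (ordl a n) = {0..<n+1}" by (simp add: ordl_def)
lemma distinct_ordl[simp]: "distinct (ordl a n)" by (simp add: ordl_def)
lemma length_ordl[simp]: "length (ordl a n) = n + 1" by (simp add: ordl_def)

lemma Hplus_D:
  assumes "h \<in> Hplus n"
  shows "length (fib h) = n + 1" "src h = n" "tgt h = n" "\<And>k. k \<le> n \<Longrightarrow> length (fib h ! k) = 1"
    "fib h ! 0 = [(0, False)]"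
proof -
  have v: "valid h" and s: "src h = n" and t: "tgt h = n" and l: "\<forall>k \<le> n. length (fib h ! k) = 1"
    and z: "fib h ! 0 = [(0, False)]" using assms unfolding Hplus_def by blast+
  show "length (fib h) = n + 1" using v t unfolding valid_def by simp
  show "src h = n" "tgt h = n" "fib h ! 0 = [(0, False)]" using s t z by blast+
  fix k assume "k \<le> n"
  then show "length (fib h ! k) = 1" using l by blast
qed

lemma len1_eq: "length xs = 1 \<Longrightarrow> length ys = 1 \<Longrightarrow> hd xs = hd ys \<Longrightarrow> xs = ys"
  by (cases xs; cases ys) auto

lemma comp_form:
  assumes ia: "Inv a" and h: "h \<in> Hplus n" and sa: "src a = n"
  shows "comp a h = Mor n (tgt a) (map (map (phi h)) (fib a))"
proof -
  have "\<exists>\<alpha> r. concat (fib a) = map (\<lambda>x. (x, \<alpha>)) (rotate r (ordl \<alpha> (src a)))"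
    using ia unfolding Inv_def by blast
  then obtain \<alpha> r where ra: "concat (fib a) = map (\<lambda>x. (x, \<alpha>)) (rotate r (ordl \<alpha> n))"
    using sa by auto
  have "\<forall>x\<in>set (concat (fib a)). length (fib h ! fst x) = 1"
  proof
    fix x assume "x \<in> set (concat (fib a))"
    then have "fst x \<le> n" using ra by auto
    then show "length (fib h ! fst x) = 1" by (rule Hplus_D(4)[OF h])
  qed
  then have "comp a h = Mor (src h) (tgt a) (map (map (phi h)) (fib a))" by (rule comp_single)
  then show ?thesis using Hplus_D(2)[OF h] by simp
qed

lemma uniq:
  assumes vf: "valid f" and ia: "Inv a" and ia': "Inv a'" and h: "h \<in> Hplus n" and h': "h' \<in> Hplus n"
    and sa: "src a = n" and sa': "src a' = n" and ta: "tgt a = tgt a'"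
    and fa: "f = comp a h" and fa': "f = comp a' h'"
  shows "a = a' \<and> h = h'"
proof -
  have "\<exists>\<alpha> r. concat (fib a) = map (\<lambda>x. (x, \<alpha>)) (rotate r (ordl \<alpha> (src a)))"
    using ia unfolding Inv_def by blast
  then obtain \<alpha> r where ra: "concat (fib a) = map (\<lambda>x. (x, \<alpha>)) (rotate r (ordl \<alpha> n))"
    using sa by auto
  have "\<exists>\<alpha> r. concat (fib a') = map (\<lambda>x. (x, \<alpha>)) (rotate r (ordl \<alpha> (src a')))"
    using ia' unfolding Inv_def by blast
  then obtain \<alpha>' r' where ra': "concat (fib a') = map (\<lambda>x. (x, \<alpha>')) (rotate r' (ordl \<alpha>' n))"
    using sa' by auto
  have ff: "fib f = map (map (phi h)) (fib a)" using comp_form[OF ia h sa] fa by simp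
  have ff': "fib f = map (map (phi h')) (fib a')" using comp_form[OF ia' h' sa'] fa' by simp
  have cf: "concat (fib f) = map (phi h) (concat (fib a))" using ff by (simp add: map_concat)
  have cf': "concat (fib f) = map (phi h') (concat (fib a'))" using ff' by (simp add: map_concat)
  have p0: "\<And>b. phi h (0, b) = (0, b)" using Hplus_D(5)[OF h] by (simp add: phi_def)
  have p0': "\<And>b. phi h' (0, b) = (0, b)" using Hplus_D(5)[OF h'] by (simp add: phi_def)
  have "0 \<in> set (rotate r (ordl \<alpha> n))" by simp
  then obtain q where q: "q < n + 1" "rotate r (ordl \<alpha> n) ! q = 0"
    by (metis in_set_conv_nth length_ordl length_rotate)
  have "0 \<in> set (rotate r' (ordl \<alpha>' n))" by simp
  then obtain q' where q': "q' < n + 1" "rotate r' (ordl \<alpha>' n) ! q' = 0"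
    by (metis in_set_conv_nth length_ordl length_rotate)
  have lcf: "length (concat (fib f)) = n + 1" using cf ra by simp
  have cq: "concat (fib f) ! q = (0, \<alpha>)" using cf ra q p0 by simp
  have cq': "concat (fib f) ! q' = (0, \<alpha>')" using cf' ra' q' p0' by simp
  have df: "distinct (map fst (concat (fib f)))" using vf valid_def by blast
  have "map fst (concat (fib f)) ! q = map fst (concat (fib f)) ! q'"
    using cq cq' q q' lcf by simp
  then have qq: "q = q'" using nth_eq_iff_index_eq[OF df, of q q'] q q' lcf by simp
  then have aa: "\<alpha> = \<alpha>'" using cq cq' by simp
  have "rotate r (ordl \<alpha> n) = rotate r' (ordl \<alpha> n)"
    using rot_eq[of "ordl \<alpha> n" q r r'] q q' qq aa by simp
  then have cc: "concat (fib a) = concat (fib a')" using ra ra' aa by simp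
  have "map length (fib f) = map length (fib a)" using ff by (simp add: o_def)
  moreover have "map length (fib f) = map length (fib a')" using ff' by (simp add: o_def)
  ultimately have "map length (fib a) = map length (fib a')" by simp
  then have "fib a = fib a'" using cc concat_len_eq by blast
  then have A: "a = a'" using sa sa' ta by (cases a; cases a') auto
  have mm: "map (phi h) (concat (fib a)) = map (phi h') (concat (fib a))"
    using cf cf' cc by simp
  have "fib h = fib h'"
  proof (rule nth_equalityI)
    show "length (fib h) = length (fib h')" using Hplus_D(1)[OF h] Hplus_D(1)[OF h'] by simp
    fix j assume "j < length (fib h)"
    then have j: "j \<le> n" using Hplus_D(1)[OF h] by simp
    then have "(j, \<alpha>) \<in> set (concat (fib a))" using ra by auto
    then have "phi h (j, \<alpha>) = phi h' (j, \<alpha>)" using mm unfolding map_eq_conv by blast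
    then have "hd (fib h ! j) = hd (fib h' ! j)" by (auto simp: phi_def prod_eq_iff)
    then show "fib h ! j = fib h' ! j" using Hplus_D(4)[OF h j] Hplus_D(4)[OF h' j] len1_eq by blast
  qed
  then have "h = h'" using Hplus_D(2,3)[OF h] Hplus_D(2,3)[OF h'] by (cases h; cases h') auto
  then show ?thesis using A by simp
qed



lemma act_False[simp]: "act False S = S" by (simp add: act_def)

lemma comp_face_left:
  assumes "length H = M + 1" "k < M"
  shows "comp (face M k) (Mor n M H) = Mor n (M - 1) (take k H @ [H!k @ H!(k+1)] @ drop (k+2) H)"
proof -
  have "map (\<lambda>S. concat (map (\<lambda>(j, \<alpha>). act \<alpha> (H ! j)) S)) (fib (face M k))
      = take k H @ [H!k @ H!(k+1)] @ drop (k+2) H"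
  proof (rule nth_equalityI)
    show "length (map (\<lambda>S. concat (map (\<lambda>(j, \<alpha>). act \<alpha> (H ! j)) S)) (fib (face M k))) =
       length (take k H @ [H!k @ H!(k+1)] @ drop (k+2) H)" using assms by (simp add: face_def)
    fix i assume "i < length (map (\<lambda>S. concat (map (\<lambda>(j, \<alpha>). act \<alpha> (H ! j)) S)) (fib (face M k)))"
    then have i: "i < M" by (simp add: face_def)
    show "map (\<lambda>S. concat (map (\<lambda>(j, \<alpha>). act \<alpha> (H ! j)) S)) (fib (face M k)) ! i =
        (take k H @ [H!k @ H!(k+1)] @ drop (k+2) H) ! i"
      using i assms by (auto simp: face_def nth_append min_def)
  qed
  then show ?thesis using assms by (simp add: comp_def face_def)
qed

lemma comp_degen_left:
  assumes "length H = m + 1" "j \<le> m"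
  shows "comp (degen m j) (Mor n m H) = Mor n (m + 1) (take (j+1) H @ [[]] @ drop (j+1) H)"
proof -
  have "map (\<lambda>S. concat (map (\<lambda>(j, \<alpha>). act \<alpha> (H ! j)) S)) (fib (degen m j))
      = take (j+1) H @ [[]] @ drop (j+1) H"
  proof (rule nth_equalityI)
    show "length (map (\<lambda>S. concat (map (\<lambda>(j, \<alpha>). act \<alpha> (H ! j)) S)) (fib (degen m j))) =
       length (take (j+1) H @ [[]] @ drop (j+1) H)" using assms by (simp add: degen_def)
    fix i assume "i < length (map (\<lambda>S. concat (map (\<lambda>(j, \<alpha>). act \<alpha> (H ! j)) S)) (fib (degen m j)))"
    then have i: "i < m + 2" by (simp add: degen_def)
    show "map (\<lambda>S. concat (map (\<lambda>(j, \<alpha>). act \<alpha> (H ! j)) S)) (fib (degen m j)) ! i =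
        (take (j+1) H @ [[]] @ drop (j+1) H) ! i"
      using i assms apply (auto simp: degen_def nth_append min_def)
      apply (subgoal_tac "i - Suc 0 = Suc (i - 2)")
       apply simp
      apply arith
      done
  qed
  then show ?thesis using assms by (simp add: comp_def degen_def)
qed



definition wt :: "'a list \<Rightarrow> nat" where "wt S = (if S = [] then 1 else 2 * length S - 1)"
definition mu :: "'a list list \<Rightarrow> nat" where "mu G = sum_list (map wt G)"

lemma mu_append[simp]: "mu (xs @ ys) = mu xs + mu ys" by (simp add: mu_def)
lemma mu_Cons[simp]: "mu (x # xs) = wt x + mu xs" by (simp add: mu_def)
lemma mu_Nil[simp]: "mu [] = 0" by (simp add: mu_def)

lemma singletons_concat: "\<forall>x\<in>set L. length x = 1 \<Longrightarrow> L = map (\<lambda>x. [x]) (concat L)"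
proof (induction L)
  case Nil then show ?case by simp
next
  case (Cons x L)
  then obtain y where "x = [y]" by (cases x) (auto simp: length_Suc_conv)
  then show ?case using Cons by simp
qed

lemma E2:
  assumes base: "Mor n (n - p) (take (p+1) c # map (\<lambda>x. [x]) (drop (p+1) c)) \<in> Rcat"
    and lc: "length c = n + 1" and pn: "p \<le> n"
  shows "G \<noteq> [] \<Longrightarrow> concat G = c \<Longrightarrow> p + 1 \<le> length (hd G) \<Longrightarrow> Mor n (length G - 1) G \<in> Rcat"
proof (induction "mu G" arbitrary: G rule: less_induct)
  case less
  show ?case
  proof (cases "\<exists>k. 1 \<le> k \<and> k < length G \<and> G!k = []")
    case True
    then obtain k where k: "1 \<le> k" "k < length G" "G!k = []" by blast
    define G' where "G' = take k G @ drop (k+1) G"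
    have dec: "G = take k G @ G!k # drop (Suc k) G" using k id_take_nth_drop by blast
    have "mu G = mu (take k G) + wt (G!k) + mu (drop (Suc k) G)"
      by (subst dec) simp
    then have mu: "mu G' < mu G" using k by (simp add: G'_def wt_def)
    have tk: "take k G \<noteq> []" using k by (cases G) auto
    have ne: "G' \<noteq> []" using tk by (simp add: G'_def)
    have "concat G = concat (take k G) @ concat (drop (Suc k) G)"
      by (subst dec) (simp add: k)
    then have cc: "concat G' = c" using less.prems by (simp add: G'_def)
    have "hd G' = hd G" using tk k by (simp add: G'_def hd_take)
    then have hh: "p + 1 \<le> length (hd G')" using less.prems by simp
    have IH: "Mor n (length G' - 1) G' \<in> Rcat" using less.hyps[OF mu ne cc hh] .
    define M where "M = length G' - 1"
    have lG': "length G' = M + 1" using ne M_def by (cases G') auto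
    have lG: "length G = M + 2" using lG' k by (simp add: G'_def)
    have dg: "degen M (k - 1) \<in> Rcat" using k lG by (intro R_degen) simp
    have "comp (degen M (k - 1)) (Mor n M G') \<in> Rcat"
      using R_comp[OF IH[folded M_def] dg] by (simp add: degen_def)
    moreover have "comp (degen M (k - 1)) (Mor n M G') = Mor n (length G - 1) G"
    proof -
      have "comp (degen M (k - 1)) (Mor n M G') = Mor n (M + 1) (take k G' @ [[]] @ drop k G')"
        using comp_degen_left[OF lG', of "k - 1" n] k lG by simp
      also have "take k G' = take k G" using k by (simp add: G'_def)
      also have "drop k G' = drop (Suc k) G" using k by (simp add: G'_def)
      finally show ?thesis using dec k lG by simp
    qed
    ultimately show ?thesis by simp
  next
    case noempty: False
    show ?thesis
    proof (cases "\<exists>k. 1 \<le> k \<and> k < length G \<and> 2 \<le> length (G!k)")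
      case True
      then obtain k where k: "1 \<le> k" "k < length G" "2 \<le> length (G!k)" by blast
      define S where "S = G!k"
      define G' where "G' = take k G @ [hd S] # tl S # drop (k+1) G"
      have dec: "G = take k G @ S # drop (Suc k) G" using k id_take_nth_drop S_def by blast
      have lS: "2 \<le> length S" using k S_def by simp
      have Sne: "S \<noteq> []" "tl S \<noteq> []" using lS by (cases S; auto)+
      have "S = hd S # tl S" using Sne by simp
      have "wt S = 2 * length (tl S) + 1" using Sne lS by (simp add: wt_def)
      moreover have "wt (tl S) = 2 * length (tl S) - 1" using Sne by (simp add: wt_def)
      moreover have "length (tl S) \<ge> 1" using Sne by (cases "tl S") auto
      moreover have "mu G = mu (take k G) + wt S + mu (drop (Suc k) G)"
        by (subst dec) simp
      ultimately have mu: "mu G' < mu G" using Sne lS by (simp add: G'_def wt_def)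
      have tk: "take k G \<noteq> []" using k by (cases G) auto
      have ne: "G' \<noteq> []" using tk by (simp add: G'_def)
      have "concat G = concat (take k G) @ S @ concat (drop (Suc k) G)"
        by (subst dec) simp
      then have cc: "concat G' = c" using less.prems Sne by (simp add: G'_def)
      have "hd G' = hd G" using tk k by (simp add: G'_def hd_take)
      then have hh: "p + 1 \<le> length (hd G')" using less.prems by simp
      have IH: "Mor n (length G' - 1) G' \<in> Rcat" using less.hyps[OF mu ne cc hh] .
      define M where "M = length G' - 1"
      have lG': "length G' = M + 1" using ne M_def by (cases G') auto
      have lG: "length G = M" using lG' k by (simp add: G'_def)
      have fc: "face M k \<in> Rcat" using k lG by (intro R_face) simp_all
      have "comp (face M k) (Mor n M G') \<in> Rcat"
        using R_comp[OF IH[folded M_def] fc] by (simp add: face_def)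
      moreover have "comp (face M k) (Mor n M G') = Mor n (length G - 1) G"
      proof -
        have "comp (face M k) (Mor n M G') = Mor n (M - 1) (take k G' @ [G'!k @ G'!(k+1)] @ drop (k+2) G')"
          using comp_face_left[OF lG', of k n] k lG by simp
        also have "take k G' = take k G" using k by (simp add: G'_def)
        also have "G'!k @ G'!(k+1) = S" using k Sne by (simp add: G'_def nth_append)
        also have "drop (k+2) G' = drop (Suc k) G" using k by (simp add: G'_def)
        finally show ?thesis using dec lG by simp
      qed
      ultimately show ?thesis by simp
    next
      case nobig: False
      show ?thesis
      proof (cases "p + 1 < length (hd G)")
        case True
        define S where "S = hd G"
        define G' where "G' = butlast S # [last S] # tl G"
        have dec: "G = S # tl G" using less.prems S_def by simp
        have lS: "2 \<le> length S" using True S_def by simp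
        have Sne: "S \<noteq> []" "butlast S \<noteq> []" using lS by (cases S rule: rev_cases; auto)+
        have bl: "butlast S @ [last S] = S" using Sne by simp
        have "length S = length (butlast S) + 1" using Sne by simp
        moreover have "wt S = 2 * length S - 1" "wt (butlast S) = 2 * length (butlast S) - 1"
          using Sne by (simp_all add: wt_def)
        moreover have "length (butlast S) \<ge> 1" using Sne by (cases "butlast S") auto
        moreover have "mu G = wt S + mu (tl G)" by (subst dec) simp
        ultimately have mu: "mu G' < mu G" using Sne lS by (simp add: G'_def wt_def)
        have ne: "G' \<noteq> []" by (simp add: G'_def)
        have "concat G = S @ concat (tl G)" by (subst dec) simp
        then have cc: "concat G' = c" using less.prems bl by (simp add: G'_def)
        have hh: "p + 1 \<le> length (hd G')" using True S_def by (simp add: G'_def)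
        have IH: "Mor n (length G' - 1) G' \<in> Rcat" using less.hyps[OF mu ne cc hh] .
        define M where "M = length G' - 1"
        have lG': "length G' = M + 1" using ne M_def by (cases G') auto
        have "length G = length (tl G) + 1" using less.prems by (cases G) auto
        then have lG: "length G = M" using lG' by (simp add: G'_def)
        have M1: "1 \<le> M" using lG less.prems by (cases G) auto
        have fc: "face M 0 \<in> Rcat" using M1 by (intro R_face) simp_all
        have "comp (face M 0) (Mor n M G') \<in> Rcat"
          using R_comp[OF IH[folded M_def] fc] by (simp add: face_def)
        moreover have "comp (face M 0) (Mor n M G') = Mor n (length G - 1) G"
        proof -
          have "comp (face M 0) (Mor n M G') = Mor n (M - 1) (take 0 G' @ [G'!0 @ G'!(0+1)] @ drop (0+2) G')"
            using comp_face_left[OF lG', of 0 n] M1 by simp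
          also have "take 0 G' @ [G'!0 @ G'!(0+1)] @ drop (0+2) G' = G"
            using bl dec by (simp add: G'_def)
          finally show ?thesis using lG by simp
        qed
        ultimately show ?thesis by simp
      next
        case False
        have h1: "length (hd G) = p + 1" using False less.prems by simp
        have "\<forall>x\<in>set (tl G). length x = 1"
        proof
          fix x assume "x \<in> set (tl G)"
          then obtain i where i: "i < length (tl G)" "x = tl G ! i" by (metis in_set_conv_nth)
          then have "G ! (Suc i) = x" "Suc i < length G" using less.prems by (cases G; auto)+
          moreover have "1 \<le> Suc i" by simp
          ultimately have "x \<noteq> []" "\<not> 2 \<le> length x" using noempty nobig by blast+
          then show "length x = 1" by (cases x) (auto simp: Suc_le_eq)
        qed
        then have tG: "tl G = map (\<lambda>x. [x]) (concat (tl G))" by (rule singletons_concat)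
        have dec: "G = hd G # tl G" using less.prems by simp
        have "c = hd G @ concat (tl G)" using less.prems by (metis concat.simps(2) dec)
        then have "hd G = take (p+1) c" "concat (tl G) = drop (p+1) c" using h1 by simp_all
        then have GG: "G = take (p+1) c # map (\<lambda>x. [x]) (drop (p+1) c)" using dec tG by metis
        then have "length G - 1 = n - p" using lc by simp
        then show ?thesis using base GG by simp
      qed
    qed
  qed
qed



definition rf :: "nat \<Rightarrow> nat \<Rightarrow> nat" where "rf n k = (if k = 0 then 0 else n + 1 - k)"
definition seqF :: "nat \<Rightarrow> nat \<Rightarrow> nat list" where "seqF n p = [n+1-p..<n+1] @ [0..<n+1-p]"
definition seq :: "bool \<Rightarrow> nat \<Rightarrow> nat \<Rightarrow> nat list" where
  "seq a n p = (if a then map (rf n) (seqF n p) else seqF n p)"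
definition Sp :: "nat \<Rightarrow> nat \<Rightarrow> bool \<Rightarrow> mor" where
  "Sp n p a = Mor n (n - p) (take (p+1) (map (\<lambda>x. (x, a)) (seq a n p))
       # map (\<lambda>x. [x]) (drop (p+1) (map (\<lambda>x. (x, a)) (seq a n p))))"

lemma take_seqF: "p \<le> n \<Longrightarrow> take (Suc p) (seqF n p) = [n+1-p..<n+1] @ [0]"
  by (simp add: seqF_def upt_conv_Cons)
lemma drop_seqF: "p \<le> n \<Longrightarrow> drop (Suc p) (seqF n p) = [1..<n+1-p]"
  by (simp add: seqF_def upt_conv_Cons)

lemma Sp_F: "p \<le> n \<Longrightarrow> Sp n p False = Mor n (n - p)
   (map (\<lambda>x. (x, False)) ([n+1-p..<n+1] @ [0]) # map (\<lambda>x. [(x, False)]) [1..<n+1-p])"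
  unfolding Sp_def seq_def by (simp add: take_map drop_map take_seqF drop_seqF o_def del: upt_Suc)

lemma Sp_T: "p \<le> n \<Longrightarrow> Sp n p True = Mor n (n - p)
   (map (\<lambda>x. (rf n x, True)) ([n+1-p..<n+1] @ [0]) # map (\<lambda>x. [(rf n x, True)]) [1..<n+1-p])"
  unfolding Sp_def seq_def by (simp add: take_map drop_map take_seqF drop_seqF o_def del: upt_Suc)

lemma src_face[simp]: "src (face n i) = n" and tgt_face[simp]: "tgt (face n i) = n - 1"
  and src_refl[simp]: "src (refl_mor n) = n" and tgt_refl[simp]: "tgt (refl_mor n) = n"
  by (simp_all add: face_def refl_mor_def)

lemma face_last_nth: "j < Suc k \<Longrightarrow> fib (face (Suc k) (Suc k)) ! j = (if j = 0 then [(Suc k, False), (0, False)] else [(j, False)])"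
  by (simp add: face_def)

lemma E1F: "p \<le> n \<Longrightarrow> Sp n p False \<in> Rcat"
proof (induction p arbitrary: n)
  case 0
  have "Sp n 0 False = idm n" using Sp_F[of 0 n] by (simp add: idm_def upt_conv_Cons)
  then show ?case using R_id by simp
next
  case (Suc p)
  then obtain k where k: "n = Suc k" by (cases n) auto
  have pk: "p \<le> k" using Suc.prems k by simp
  have IH: "Sp k p False \<in> Rcat" using Suc.IH pk by simp
  have fc: "face (Suc k) (Suc k) \<in> Rcat" by (rule R_face) simp_all
  have "comp (Sp k p False) (face (Suc k) (Suc k)) \<in> Rcat"
    using R_comp[OF fc IH] pk by (simp add: face_def Sp_F)
  moreover have "comp (Sp k p False) (face (Suc k) (Suc k)) = Sp n (Suc p) False"
  proof -
    define fd where "fd = fib (face (Suc k) (Suc k))"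
    have m1: "map (\<lambda>j. fd ! j) [k+1-p..<k+1] = map (\<lambda>j. [(j, False)]) [k+1-p..<k+1]"
      using pk by (intro map_cong) (auto simp: fd_def face_last_nth)
    have m2: "map (\<lambda>j. fd ! j) [1..<k+1-p] = map (\<lambda>j. [(j, False)]) [1..<k+1-p]"
      by (rule map_cong) (auto simp: fd_def face_last_nth)
    have f0: "fd ! 0 = [(Suc k, False), (0, False)]" by (simp add: fd_def face_last_nth)
    have "comp (Sp k p False) (face (Suc k) (Suc k)) = Mor (Suc k) (k - p)
       (concat (map (\<lambda>j. fd ! j) ([k+1-p..<k+1] @ [0]))
        # map (\<lambda>x. fd ! x) [1..<k+1-p])"
      using pk by (simp add: Sp_F comp_def fd_def[symmetric] o_def del: upt_Suc)
    also have "\<dots> = Mor (Suc k) (k - p) (map (\<lambda>x. (x, False)) (([k+1-p..<k+1] @ [Suc k]) @ [0])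
        # map (\<lambda>x. [(x, False)]) [1..<k+1-p])"
      by (simp only: map_append concat_append m1 m2 concat_map_singleton) (simp add: f0)
    also have "[k+1-p..<k+1] @ [Suc k] = [Suc k + 1 - Suc p..<Suc k + 1]"
      using pk by (simp add: upt_Suc)
    finally show ?thesis using Sp_F[of "Suc p" n] Suc.prems k by simp
  qed
  ultimately show ?case by simp
qed

lemma refl_nth: "j \<le> n \<Longrightarrow> fib (refl_mor n) ! j = [(rf n j, True)]"
  by (simp add: refl_mor_def rf_def nth_append del: upt_Suc)

lemma E1: "p \<le> n \<Longrightarrow> Sp n p a \<in> Rcat"
proof (cases a)
  case False
  assume "p \<le> n" then show ?thesis using E1F False by simp
next
  case True
  assume pn: "p \<le> n"
  define fr where "fr = fib (refl_mor n)"
  have m1: "map (\<lambda>j. fr ! j) [n+1-p..<n+1] = map (\<lambda>j. [(rf n j, True)]) [n+1-p..<n+1]"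
    by (rule map_cong) (auto simp: fr_def refl_nth)
  have m2: "map (\<lambda>j. fr ! j) [1..<n+1-p] = map (\<lambda>j. [(rf n j, True)]) [1..<n+1-p]"
    by (rule map_cong) (auto simp: fr_def refl_nth)
  have f0: "fr ! 0 = [(rf n 0, True)]" unfolding fr_def by (rule refl_nth) simp
  have "comp (Sp n p False) (refl_mor n) = Mor n (n - p)
       (concat (map (\<lambda>j. fr ! j) ([n+1-p..<n+1] @ [0]))
        # map (\<lambda>x. fr ! x) [1..<n+1-p])"
    using pn by (simp add: Sp_F comp_def fr_def[symmetric] o_def del: upt_Suc)
  also have "\<dots> = Sp n p True"
    using pn by (simp only: map_append concat_append m1 m2 concat_map_singleton Sp_T) (simp add: f0)
  finally have eq: "comp (Sp n p False) (refl_mor n) = Sp n p True" .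
  have "comp (Sp n p False) (refl_mor n) \<in> Rcat"
    using R_comp[OF R_refl E1F[OF pn]] pn by (simp add: refl_mor_def Sp_F)
  then show ?thesis using eq True by simp
qed



fun chunks :: "nat list \<Rightarrow> 'a list \<Rightarrow> 'a list list" where
  "chunks [] xs = []"
| "chunks (l # ls) xs = take l xs # chunks ls (drop l xs)"

lemma length_chunks[simp]: "length (chunks ls xs) = length ls"
  by (induction ls arbitrary: xs) auto

lemma concat_chunks: "concat (chunks ls xs) = take (sum_list ls) xs"
  by (induction ls arbitrary: xs) (auto simp: take_add)

lemma map_chunks: "map (map f) (chunks ls xs) = chunks ls (map f xs)"
  by (induction ls arbitrary: xs) (auto simp: take_map drop_map)

lemma chunks_concat: "chunks (map length G) (concat G) = G"
  by (induction G) auto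

lemma seqF_facts:
  assumes "p \<le> n"
  shows "length (seqF n p) = n + 1" "distinct (seqF n p)" "set (seqF n p) = {0..n}" "seqF n p ! p = 0"
  using assms by (auto simp: seqF_def nth_append)

lemma rf_inj: "inj_on (rf n) {0..n}" by (auto simp: inj_on_def rf_def split: if_splits)
lemma rf_img: "rf n ` {0..n} = {0..n}"
proof
  show "rf n ` {0..n} \<subseteq> {0..n}" by (auto simp: rf_def)
  show "{0..n} \<subseteq> rf n ` {0..n}"
  proof
    fix x assume x: "x \<in> {0..n}"
    have "rf n (rf n x) = x" using x by (auto simp: rf_def)
    moreover have "rf n x \<in> {0..n}" using x by (auto simp: rf_def)
    ultimately show "x \<in> rf n ` {0..n}" by force
  qed
qed

lemma seq_facts:
  assumes "p \<le> n"
  shows "length (seq a n p) = n + 1" "distinct (seq a n p)" "set (seq a n p) = {0..n}" "seq a n p ! p = 0"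
proof -
  show "length (seq a n p) = n + 1" using seqF_facts[OF assms] by (simp add: seq_def)
  show "distinct (seq a n p)" using seqF_facts[OF assms] rf_inj
    by (simp add: seq_def distinct_map)
  show "set (seq a n p) = {0..n}" using seqF_facts[OF assms] rf_img by (simp add: seq_def)
  show "seq a n p ! p = 0" using seqF_facts[OF assms] assms by (simp add: seq_def rf_def)
qed

lemma exist:
  assumes ig: "IGamma f"
  shows "\<exists>a h. a \<in> Rcat \<and> h \<in> Hplus (src f) \<and> src a = src f \<and> tgt a = tgt f \<and> f = comp a h"
proof -
  define n where "n = src f"
  define m where "m = tgt f"
  define F where "F = fib f"
  define cf where "cf = concat F"
  have vf: "valid f" using ig IGamma_def by blast
  have lF: "length F = m + 1" using vf by (simp add: valid_def F_def m_def)
  have dcf: "distinct (map fst cf)" using vf by (simp add: valid_def F_def cf_def)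
  have scf: "set (map fst cf) = {0..n}" using vf by (simp add: valid_def F_def cf_def n_def)
  have lcf: "length cf = n + 1"
    using distinct_card[OF dcf] scf by simp
  have "0 \<in> fst ` set (F ! 0)" using ig by (simp add: IGamma_def F_def)
  then obtain p where p: "p < length (F ! 0)" "fst (F ! 0 ! p) = 0"
    by (metis imageE in_set_conv_nth)
  have Fd: "F = F ! 0 # tl F" using lF by (cases F) auto
  have cfd: "cf = F ! 0 @ concat (tl F)" unfolding cf_def by (subst Fd) simp
  then have cfp0: "cf ! p = F ! 0 ! p" using p by (simp add: nth_append)
  have pn: "p \<le> n" using p lcf cfd by simp
  define \<alpha> where "\<alpha> = snd (cf ! p)"
  have cfp: "cf ! p = (0, \<alpha>)" using cfp0 p \<alpha>_def by (simp add: prod_eq_iff)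
  define c where "c = map (\<lambda>x. (x, \<alpha>)) (seq \<alpha> n p)"
  note sf = seq_facts[OF pn, of \<alpha>]
  have lc: "length c = n + 1" using sf by (simp add: c_def)
  have mfc: "map fst c = seq \<alpha> n p" by (simp add: c_def o_def)
  have dc: "distinct (map fst c)" using sf mfc by simp
  have sc: "set (map fst c) = {0..n}" using sf mfc by simp
  have cp: "c ! p = (0, \<alpha>)" using sf pn by (simp add: c_def)
  define ls where "ls = map length F"
  have sls: "sum_list ls = n + 1" using lcf by (simp add: ls_def cf_def length_concat)
  define G where "G = chunks ls c"
  have lG: "length G = m + 1" using lF by (simp add: G_def ls_def)
  have cG: "concat G = c" using sls lc by (simp add: G_def concat_chunks)
  have hG: "hd G = take (length (F ! 0)) c" using Fd by (simp add: G_def ls_def) (metis chunks.simps(2) list.map(2) list.sel(1))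
  have "p + 1 \<le> length (hd G)" using hG p lc pn by simp
  then have aR: "Mor n (length G - 1) G \<in> Rcat"
    using E2[OF _ lc pn, of G] E1[OF pn, of \<alpha>] lG cG unfolding Sp_def c_def by force
  define a where "a = Mor n m G"
  have aR': "a \<in> Rcat" using aR lG by (simp add: a_def)
  define pos where "pos j = (SOME q. q < n + 1 \<and> fst (c ! q) = j)" for j
  have pos1: "pos j < n + 1 \<and> fst (c ! pos j) = j" if j: "j \<le> n" for j
  proof -
    have "j \<in> set (map fst c)" using sc j by simp
    then obtain q where "q < n + 1" "fst (c ! q) = j" using lc by (metis in_set_conv_nth length_map nth_map)
    then have "\<exists>q. q < n + 1 \<and> fst (c ! q) = j" by blast
    then show ?thesis unfolding pos_def by (rule someI_ex)
  qed
  have pos2: "pos (fst (c ! q)) = q" if q: "q < n + 1" for q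
  proof -
    have "fst (c ! q) \<in> set (map fst c)" using q lc by (metis in_set_conv_nth length_map nth_map)
    then have j: "fst (c ! q) \<le> n" using sc by auto
    have "map fst c ! pos (fst (c ! q)) = map fst c ! q" using pos1[OF j] q lc by simp
    then show ?thesis using nth_eq_iff_index_eq[OF dc, of "pos (fst (c ! q))" q] pos1[OF j] q lc by simp
  qed
  have pos0: "pos 0 = p" using pos2[of p] pn cp by simp
  define h where "h = Mor n n (map (\<lambda>j. [(fst (cf ! pos j), \<alpha> \<noteq> snd (cf ! pos j))]) [0..<n+1])"
  have fibh: "fib h ! j = [(fst (cf ! pos j), \<alpha> \<noteq> snd (cf ! pos j))]" if "j \<le> n" for j
    using that by (simp add: h_def nth_append del: upt_Suc)
  have mh: "map fst (concat (fib h)) = map (\<lambda>j. fst (cf ! pos j)) [0..<n+1]"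
    by (simp add: h_def o_def del: upt_Suc)
  have injh: "inj_on (\<lambda>j. fst (cf ! pos j)) {0..<n+1}"
  proof (rule inj_onI)
    fix j j' assume j: "j \<in> {0..<n+1}" and j': "j' \<in> {0..<n+1}"
      and e: "fst (cf ! pos j) = fst (cf ! pos j')"
    have a1: "pos j < n + 1" "pos j' < n + 1" using pos1 j j' by auto
    have "map fst cf ! pos j = map fst cf ! pos j'" using e a1 lcf by simp
    then have "pos j = pos j'" using nth_eq_iff_index_eq[OF dcf, of "pos j" "pos j'"] a1 lcf by simp
    then show "j = j'" using pos1 j j' by (metis atLeastLessThan_iff less_Suc_eq_le Suc_eq_plus1)
  qed
  have seth: "set (map (\<lambda>j. fst (cf ! pos j)) [0..<n+1]) = {0..n}"
  proof
    show "set (map (\<lambda>j. fst (cf ! pos j)) [0..<n+1]) \<subseteq> {0..n}"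
    proof
      fix x assume "x \<in> set (map (\<lambda>j. fst (cf ! pos j)) [0..<n+1])"
      then obtain j where j: "j < n + 1" "x = fst (cf ! pos j)" by auto
      then have "pos j < length cf" using pos1[of j] lcf by simp
      then have "x \<in> set (map fst cf)" using j by (metis in_set_conv_nth length_map nth_map)
      then show "x \<in> {0..n}" using scf by simp
    qed
    show "{0..n} \<subseteq> set (map (\<lambda>j. fst (cf ! pos j)) [0..<n+1])"
    proof
      fix x assume "x \<in> {0..n}"
      then have "x \<in> set (map fst cf)" using scf by simp
      then obtain q where q: "q < n + 1" "fst (cf ! q) = x" using lcf by (metis in_set_conv_nth length_map nth_map)
      have "fst (c ! q) \<in> set (map fst c)" using q lc by (metis in_set_conv_nth length_map nth_map)
      then have j: "fst (c ! q) \<le> n" using sc by auto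
      have "x = fst (cf ! pos (fst (c ! q)))" using pos2 q by simp
      then show "x \<in> set (map (\<lambda>j. fst (cf ! pos j)) [0..<n+1])" using j by auto
    qed
  qed
  have hH: "h \<in> Hplus n"
  proof -
    have lh: "length (fib h) = tgt h + 1" "src h = n" by (simp_all add: h_def)
    have "valid h" unfolding valid_def mh
      using injh seth lh by (simp add: distinct_map del: upt_Suc)
    moreover have "\<forall>k \<le> n. length (fib h ! k) = 1" using fibh by simp
    moreover have "fib h ! 0 = [(0, False)]" using fibh[of 0] pos0 cfp by simp
    ultimately show ?thesis by (simp add: Hplus_def h_def)
  qed
  have "\<forall>x\<in>set (concat (fib a)). length (fib h ! fst x) = 1"
  proof
    fix x assume "x \<in> set (concat (fib a))"
    then have "fst x \<in> set (map fst c)" using cG by (simp add: a_def)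
    then have "fst x \<le> n" using sc by simp
    then show "length (fib h ! fst x) = 1" using fibh by simp
  qed
  then have cah: "comp a h = Mor n m (chunks ls (map (phi h) c))"
    using comp_single[of a h] by (simp add: a_def h_def G_def map_chunks)
  have "map (phi h) c = cf"
  proof (rule nth_equalityI)
    show "length (map (phi h) c) = length cf" using lc lcf by simp
    fix q assume "q < length (map (phi h) c)"
    then have q: "q < n + 1" using lc by simp
    have "fst (c ! q) \<in> set (map fst c)" using q lc by (metis in_set_conv_nth length_map nth_map)
    then have j: "fst (c ! q) \<le> n" using sc by auto
    have sq: "snd (c ! q) = \<alpha>" using q lc by (simp add: c_def)
    show "map (phi h) c ! q = cf ! q"
      using q lc fibh[OF j] pos2[OF q] sq by (cases \<alpha>) (simp_all add: phi_def prod_eq_iff)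
  qed
  then have "comp a h = f" using cah chunks_concat[of F]
    by (simp add: ls_def cf_def n_def m_def F_def)
  then show ?thesis using aR' hH
    by (intro exI[of _ a] exI[of _ h]) (simp add: a_def n_def m_def)
qed

theorem mainTheorem5:
  assumes "IGamma f"
  shows "\<exists>!(a, h). a \<in> Rcat \<and> h \<in> Hplus (src f)
            \<and> src a = src f \<and> tgt a = tgt f \<and> f = comp a h"
proof -
  obtain a h where ah0: "a \<in> Rcat \<and> h \<in> Hplus (src f) \<and> src a = src f \<and> tgt a = tgt f \<and> f = comp a h"
    using exist[OF assms] by iprover
  have ah: "a \<in> Rcat" "h \<in> Hplus (src f)" "src a = src f" "tgt a = tgt f" "f = comp a h"
    using ah0 by iprover+
  have vf: "valid f" using assms IGamma_def by blast
  show ?thesis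
  proof (rule ex1I[of _ "(a, h)"])
    show "case (a, h) of (a, h) \<Rightarrow> a \<in> Rcat \<and> h \<in> Hplus (src f)
            \<and> src a = src f \<and> tgt a = tgt f \<and> f = comp a h" unfolding prod.case using ah0 .
    fix y assume y: "case y of (a, h) \<Rightarrow> a \<in> Rcat \<and> h \<in> Hplus (src f)
            \<and> src a = src f \<and> tgt a = tgt f \<and> f = comp a h"
    obtain a' h' where yy: "y = (a', h')" by (cases y)
    have yy2: "a' \<in> Rcat" "h' \<in> Hplus (src f)" "src a' = src f" "tgt a' = tgt f" "f = comp a' h'"
      using y unfolding yy prod.case by iprover+
    have "a' = a \<and> h' = h"
      by (rule uniq[OF vf Rcat_Inv[OF yy2(1)] Rcat_Inv[OF ah(1)] yy2(2) ah(2) yy2(3) ah(3)])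
        (simp only: yy2(4) ah(4), rule yy2(5), rule ah(5))
    then show "y = (a, h)" using yy by simp
  qed
qed


end
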